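(* Assume Assumptions A, B, C hold, let $w^{(t)}$ be generated by Algorithm 1 with $\eta^{(t)}=D\sqrt{\varepsilon}$ ($D>0$), and suppose $\alpha_i^{(t)}\le\alpha/L_\phi$ for some $\alpha\in(0,\tfrac13)$. Then for all $i\in[n]$ and $0\le t<T$, $$\|h(w^{(t+1)};i)-h_i^*\|^2\le(1+\varepsilon)\|h(w^{(t)};i)-h_i^*\|^2-2(1-3\alpha)\alpha_i^{(t)}\big[\phi_i(h(w^{(t)};i))-\phi_i(h_i^* )\big]+\frac{3\varepsilon+2}{4}c\big(4+(V+2)GD^2\big)^2\varepsilon+\frac{3\varepsilon+2}{\varepsilon}\big\|\eta^{(t)}H_i^{(t)}v_{*\mathrm{reg}}^{(t)}-\alpha_i^{(t)}\nabla\phi_i(h(w^{(t)};i))\big\|^2.$$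
   Context: Let $n,c,d$ be positive integers and $[n]=\{1,\dots,n\}$. For each $i\in[n]$ let $h(\cdot;i):\mathbb{R}^d\to\mathbb{R}^c$ (components $h_j(\cdot;i)$) and $\phi_i:\mathbb{R}^c\to\mathbb{R}$. Each $\phi_i$ attains its minimum at $h_i^*$. Norms: Euclidean for vectors, operator for matrices. Assumption A: each $\phi_i$ is convex, bounded below, and $L_\phi$-smooth. Assumption B: each $h(\cdot;i)$ is twice continuously differentiable and there is $G>0$ with $\|\nabla_w^2 h_j(w;i)\|\le G$ for all $w,i,j$. Iteration setup: given $\varepsilon>0$, $\eta^{(t)}>0$, $\alpha_i^{(t)}>0$ and iterates $w^{(t)}$, let $H_i^{(t)}$ be the Jacobian of $h(\cdot;i)$ at $w^{(t)}$, $\Phi^{(t)}(v)=\frac{1}{2n}\sum_{i=1}^n\|\eta^{(t)}H_i^{(t)}v-\alpha_i^{(t)}\nabla\phi_i(h(w^{(t)};i))\|^2$, $\Psi^{(t)}(v)=\Phi^{(t)}(v)+\frac{\varepsilon^2}{2}\|v\|^2$, $v_{*\mathrm{reg}}^{(t)}$ its unique minimizer. Algorithm 1: $w^{(0)}$ arbitrary, $w^{(t+1)}=w^{(t)}-\eta^{(t)}v_{*\mathrm{reg}}^{(t)}$, $t=0,\dots,T-1$. Assumption C (constant $V>0$): for each $0\le t<T$ there is $\hat v^{(t)}$ with $\|\hat v^{(t)}\|^2\le V$ and $\Phi^{(t)}(\hat v^{(t)})\le\varepsilon^2$. *)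

theory Defs
  imports "HOL-Analysis.Analysis"
begin

text \<open>Phi^(t)(v) = 1/(2n) sum_{i=1..n} || eta H_i v - a_i g_i ||^2, where
  H i is the Jacobian of h(.;i) at w^(t), a i = alpha_i^(t), g i = grad phi_i(h(w^(t);i)).\<close>
definition Phi_obj :: "nat \<Rightarrow> real \<Rightarrow> (nat \<Rightarrow> real^'d^'c) \<Rightarrow> (nat \<Rightarrow> real)
    \<Rightarrow> (nat \<Rightarrow> real^'c) \<Rightarrow> real^'d \<Rightarrow> real" where
  "Phi_obj n \<eta> H a g v =
     (1 / (2 * real n)) * (\<Sum>i=1..n. (norm (\<eta> *\<^sub>R (H i *v v) - a i *\<^sub>R g i))\<^sup>2)"

definition Psi_obj :: "real \<Rightarrow> nat \<Rightarrow> real \<Rightarrow> (nat \<Rightarrow> real^'d^'c) \<Rightarrow> (nat \<Rightarrow> real)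
    \<Rightarrow> (nat \<Rightarrow> real^'c) \<Rightarrow> real^'d \<Rightarrow> real" where
  "Psi_obj \<epsilon> n \<eta> H a g v = Phi_obj n \<eta> H a g v + \<epsilon>\<^sup>2 / 2 * (norm v)\<^sup>2"

end

theory Submission
  imports Defs
begin

lemma grad_ineq:
  fixes f :: "'a::real_inner \<Rightarrow> real"
  assumes cv: "convex_on UNIV f" and d: "(f has_derivative (\<lambda>v. g \<bullet> v)) (at x)"
  shows "g \<bullet> (y - x) \<le> f y - f x"
proof -
  define p where "p s = f (x + s *\<^sub>R (y - x))" for s :: real
  have cp: "convex_on UNIV p"
  proof (rule convex_onI)
    fix t a b :: real assume t: "t > 0" "t < 1"
    have "x + ((1 - t) *\<^sub>R a + t *\<^sub>R b) *\<^sub>R (y - x)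
        = (1 - t) *\<^sub>R (x + a *\<^sub>R (y - x)) + t *\<^sub>R (x + b *\<^sub>R (y - x))"
      by (simp add: algebra_simps)
    then show "p ((1 - t) *\<^sub>R a + t *\<^sub>R b) \<le> (1 - t) * p a + t * p b"
      unfolding p_def using convex_onD[OF cv, of t] t by simp
  qed simp
  have "((\<lambda>s. x + s *\<^sub>R (y - x)) has_derivative (\<lambda>s. s *\<^sub>R (y - x))) (at 0)"
    by (auto intro!: derivative_eq_intros)
  moreover have "(f has_derivative (\<lambda>v. g \<bullet> v)) (at (x + 0 *\<^sub>R (y - x)))" using d by simp
  ultimately have "(p has_derivative (\<lambda>s. g \<bullet> (s *\<^sub>R (y - x)))) (at 0)"
    unfolding p_def using has_derivative_compose by blast
  then have "(p has_field_derivative (g \<bullet> (y - x))) (at 0)"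
    unfolding has_field_derivative_def by (simp add: mult.commute[of _ "g \<bullet> (y - x)"])
  from convex_on_imp_above_tangent[OF cp, of 0 1 "g \<bullet> (y - x)"] this
  show ?thesis unfolding p_def by simp
qed

lemma descent:
  fixes f :: "'a::real_inner \<Rightarrow> real"
  assumes d: "\<And>z. (f has_derivative (\<lambda>v. gf z \<bullet> v)) (at z)"
    and Lip: "\<And>a b. norm (gf a - gf b) \<le> L * norm (a - b)" and L: "L \<ge> 0"
  shows "f y \<le> f x + gf x \<bullet> (y - x) + L * (norm (y - x))\<^sup>2"
proof -
  define p where "p s = f (x + s *\<^sub>R (y - x))" for s :: real
  have pd: "(p has_derivative (\<lambda>s. gf (x + z *\<^sub>R (y - x)) \<bullet> (s *\<^sub>R (y - x)))) (at z within {0..1})" for z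
  proof -
    have "((\<lambda>s. x + s *\<^sub>R (y - x)) has_derivative (\<lambda>s. s *\<^sub>R (y - x))) (at z)"
      by (auto intro!: derivative_eq_intros)
    from has_derivative_compose[OF this d[of "x + z *\<^sub>R (y - x)"]]
    show ?thesis unfolding p_def by (rule has_derivative_at_withinI)
  qed
  obtain z where z: "z \<in> {0..1}" and eq: "p 1 - p 0 = gf (x + z *\<^sub>R (y - x)) \<bullet> ((1 - 0) *\<^sub>R (y - x))"
    using mvt_very_simple[of 0 1 p, OF _ pd] by auto
  have "gf (x + z *\<^sub>R (y - x)) \<bullet> (y - x) - gf x \<bullet> (y - x) = (gf (x + z *\<^sub>R (y - x)) - gf x) \<bullet> (y - x)"
    by (simp add: inner_diff_left)
  also have "\<dots> \<le> norm (gf (x + z *\<^sub>R (y - x)) - gf x) * norm (y - x)"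
    by (rule norm_cauchy_schwarz)
  also have "\<dots> \<le> (L * norm (z *\<^sub>R (y - x))) * norm (y - x)"
    using Lip[of "x + z *\<^sub>R (y - x)" x] by (intro mult_right_mono) auto
  also have "\<dots> \<le> L * (norm (y - x))\<^sup>2"
  proof -
    have "z * norm (y - x) \<le> norm (y - x)" using z by (simp add: mult_left_le_one_le)
    then have "L * (z * norm (y - x)) * norm (y - x) \<le> L * norm (y - x) * norm (y - x)"
      using L by (intro mult_right_mono mult_left_mono) auto
    then show ?thesis using z by (simp add: power2_eq_square mult.assoc)
  qed
  finally show ?thesis using eq unfolding p_def by simp
qed

lemma grad_bound:
  fixes f :: "'a::real_inner \<Rightarrow> real"
  assumes d: "\<And>z. (f has_derivative (\<lambda>v. gf z \<bullet> v)) (at z)"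
    and Lip: "\<And>a b. norm (gf a - gf b) \<le> L * norm (a - b)" and L: "L > 0"
    and mn: "\<And>z. f hs \<le> f z"
  shows "(norm (gf x))\<^sup>2 \<le> 4 * L * (f x - f hs)"
proof -
  define y where "y = x - (1 / (2 * L)) *\<^sub>R gf x"
  have "f hs \<le> f y" by (rule mn)
  also have "\<dots> \<le> f x + gf x \<bullet> (y - x) + L * (norm (y - x))\<^sup>2"
    by (rule descent[OF d Lip]) (use L in auto)
  also have "gf x \<bullet> (y - x) = - (1 / (2 * L)) * (norm (gf x))\<^sup>2"
    by (simp add: y_def power2_norm_eq_inner)
  also have "L * (norm (y - x))\<^sup>2 = (1 / (4 * L)) * (norm (gf x))\<^sup>2"
    using L by (simp add: y_def power2_eq_square field_simps)
  finally have "f hs \<le> f x - (1 / (4 * L)) * (norm (gf x))\<^sup>2"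
    using L by (simp add: field_simps)
  then show ?thesis using L by (simp add: field_simps)
qed

lemma mv_nth_inner: "(A *v x) $ j = (A $ j) \<bullet> (x :: real^'d)"
  for A :: "real^'d^'c"
  by (simp add: matrix_vector_mult_def inner_vec_def)

lemma mv_neg: "(A :: real^'d^'c) *v (- x) = - (A *v x)"
  by (simp add: matrix_vector_mult_def vec_eq_iff sum_negf)

lemma taylor_rem:
  fixes hf :: "real^'d \<Rightarrow> real^'c" and J :: "real^'d \<Rightarrow> real^'d^'c"
    and Hs :: "'c \<Rightarrow> real^'d \<Rightarrow> real^'d^'d"
  assumes dJ: "\<And>w. (hf has_derivative (\<lambda>v. J w *v v)) (at w)"
    and dH: "\<And>j w. ((\<lambda>u. J u $ j) has_derivative (\<lambda>v. Hs j w *v v)) (at w)"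
    and bH: "\<And>j w. onorm (\<lambda>v. Hs j w *v v) \<le> G"
  shows "\<bar>(hf (w - d) - hf w + J w *v d) $ j\<bar> \<le> G / 2 * (norm d)\<^sup>2"
proof -
  define \<gamma> where "\<gamma> s = w - s *\<^sub>R d" for s :: real
  define f where "f s = hf (\<gamma> s) $ j" for s
  define f1 where "f1 s = - ((J (\<gamma> s) $ j) \<bullet> d)" for s
  define f2 where "f2 s = (Hs j (\<gamma> s) *v d) \<bullet> d" for s
  have g: "(\<gamma> has_derivative (\<lambda>s'. - (s' *\<^sub>R d))) (at s)" for s
    unfolding \<gamma>_def by (auto intro!: derivative_eq_intros)
  have D1: "DERIV f s :> f1 s" for s
  proof -
    have "((\<lambda>s. hf (\<gamma> s)) has_derivative (\<lambda>s'. J (\<gamma> s) *v (- (s' *\<^sub>R d)))) (at s)"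
      using has_derivative_compose[OF g dJ] by (simp add: o_def)
    from bounded_linear.has_derivative[OF bounded_linear_vec_nth[of j] this]
    have "(f has_derivative (\<lambda>s'. (J (\<gamma> s) *v (- (s' *\<^sub>R d))) $ j)) (at s)"
      unfolding f_def .
    moreover have "(\<lambda>s'. (J (\<gamma> s) *v (- (s' *\<^sub>R d))) $ j) = (*) (f1 s)"
      by (auto simp: mult.commute f1_def mv_nth_inner matrix_vector_mult_scaleR mv_neg)
    ultimately show ?thesis unfolding has_field_derivative_def by simp
  qed
  have D2: "DERIV f1 s :> f2 s" for s
  proof -
    have "((\<lambda>s. J (\<gamma> s) $ j) has_derivative (\<lambda>s'. Hs j (\<gamma> s) *v (- (s' *\<^sub>R d)))) (at s)"
      using has_derivative_compose[OF g dH] by (simp add: o_def)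
    then have "(f1 has_derivative (\<lambda>s'. - ((Hs j (\<gamma> s) *v (- (s' *\<^sub>R d))) \<bullet> d))) (at s)"
      unfolding f1_def by (auto intro!: derivative_eq_intros)
    moreover have "(\<lambda>s'. - ((Hs j (\<gamma> s) *v (- (s' *\<^sub>R d))) \<bullet> d)) = (*) (f2 s)"
      by (auto simp: mult.commute f2_def matrix_vector_mult_scaleR mv_neg)
    ultimately show ?thesis unfolding has_field_derivative_def by simp
  qed
  define df where "df m = (if m = 0 then f else if m = 1 then f1 else f2)" for m :: nat
  obtain t where "0 < t" "t < 1" and eq:
    "f 1 = (\<Sum>m<2. df m 0 / fact m * 1 ^ m) + df 2 t / fact 2 * 1 ^ 2"
  proof -
    have "\<forall>m t. m < 2 \<and> 0 \<le> t \<and> t \<le> 1 \<longrightarrow> DERIV (df m) t :> df (Suc m) t"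
      using D1 D2 by (auto simp: df_def less_2_cases_iff)
    moreover have "df 0 = f" by (simp add: df_def)
    ultimately have "\<exists>t>0. t < 1 \<and> f 1 = (\<Sum>m<2. df m 0 / fact m * 1 ^ m) + df 2 t / fact 2 * 1 ^ 2"
      using Maclaurin[of 1 2 df f] by simp
    then show ?thesis using that by blast
  qed
  have "f 1 = f 0 + f1 0 + f2 t / 2" using eq by (simp add: df_def numeral_2_eq_2)
  moreover have "(hf (w - d) - hf w + J w *v d) $ j = f 1 - f 0 + - f1 0"
    by (simp add: f_def f1_def \<gamma>_def mv_nth_inner)
  moreover have "\<bar>f2 t\<bar> \<le> G * (norm d)\<^sup>2"
  proof -
    have "\<bar>f2 t\<bar> \<le> norm (Hs j (\<gamma> t) *v d) * norm d"
      unfolding f2_def by (rule Cauchy_Schwarz_ineq2)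
    also have "\<dots> \<le> (G * norm d) * norm d"
      using onorm[OF matrix_vector_mul_bounded_linear, of "Hs j (\<gamma> t)" d] bH[of j "\<gamma> t"]
      by (intro mult_right_mono) (auto intro: order_trans[OF _ mult_right_mono])
    finally show ?thesis by (simp add: power2_eq_square mult.assoc)
  qed
  ultimately have "(hf (w - d) - hf w + J w *v d) $ j = f2 t / 2" "\<bar>f2 t\<bar> \<le> G * (norm d)\<^sup>2"
    by simp_all
  then show ?thesis by (simp only: abs_divide)
qed


theorem mainTheorem12:
  fixes n T :: nat
    and h :: "nat \<Rightarrow> real^'d \<Rightarrow> real^'c"
    and Jh :: "nat \<Rightarrow> real^'d \<Rightarrow> real^'d^'c"
    and Hh :: "nat \<Rightarrow> 'c \<Rightarrow> real^'d \<Rightarrow> real^'d^'d"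
    and \<phi> :: "nat \<Rightarrow> real^'c \<Rightarrow> real"
    and g\<phi> :: "nat \<Rightarrow> real^'c \<Rightarrow> real^'c"
    and hs :: "nat \<Rightarrow> real^'c"
    and L G V D \<epsilon> \<alpha> :: real
    and \<eta> :: "nat \<Rightarrow> real"
    and \<alpha>i :: "nat \<Rightarrow> nat \<Rightarrow> real"
    and w vreg :: "nat \<Rightarrow> real^'d"
  assumes n_pos: "n \<ge> 1"
    \<comment> \<open>h_i^* is a minimizer of phi_i\<close>
    and hs_min: "\<And>i x. i \<in> {1..n} \<Longrightarrow> \<phi> i (hs i) \<le> \<phi> i x"
    \<comment> \<open>Assumption A\<close>
    and A_grad: "\<And>i x. i \<in> {1..n} \<Longrightarrow> (\<phi> i has_derivative (\<lambda>v. g\<phi> i x \<bullet> v)) (at x)"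
    and A_convex: "\<And>i. i \<in> {1..n} \<Longrightarrow> convex_on UNIV (\<phi> i)"
    and A_bdd: "\<And>i. i \<in> {1..n} \<Longrightarrow> bdd_below (range (\<phi> i))"
    and A_smooth: "\<And>i x y. i \<in> {1..n} \<Longrightarrow> norm (g\<phi> i x - g\<phi> i y) \<le> L * norm (x - y)"
    \<comment> \<open>Assumption B: Jh i w is the Jacobian, Hh i j w the Hessian of component j (continuous)\<close>
    and B_jac: "\<And>i w. i \<in> {1..n} \<Longrightarrow> (h i has_derivative (\<lambda>v. Jh i w *v v)) (at w)"
    and B_hess: "\<And>i j w. i \<in> {1..n} \<Longrightarrow>
                   ((\<lambda>u. Jh i u $ j) has_derivative (\<lambda>v. Hh i j w *v v)) (at w)"
    and B_cont: "\<And>i j. i \<in> {1..n} \<Longrightarrow> continuous_on UNIV (Hh i j)"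
    and G_pos: "G > 0"
    and B_bound: "\<And>i j w. i \<in> {1..n} \<Longrightarrow> onorm (\<lambda>v. Hh i j w *v v) \<le> G"
    \<comment> \<open>iteration setup\<close>
    and eps_pos: "\<epsilon> > 0"
    and D_pos: "D > 0"
    and eta_def: "\<And>t. \<eta> t = D * sqrt \<epsilon>"
    and alpha_pos: "\<And>i t. i \<in> {1..n} \<Longrightarrow> \<alpha>i i t > 0"
    and alpha_range: "0 < \<alpha>" "\<alpha> < 1/3"
    and alpha_le: "\<And>i t. i \<in> {1..n} \<Longrightarrow> t < T \<Longrightarrow> \<alpha>i i t \<le> \<alpha> / L"
    and vreg_min: "\<And>t u. t < T \<Longrightarrow>
        Psi_obj \<epsilon> n (\<eta> t) (\<lambda>i. Jh i (w t)) (\<lambda>i. \<alpha>i i t) (\<lambda>i. g\<phi> i (h i (w t))) (vreg t)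
        \<le> Psi_obj \<epsilon> n (\<eta> t) (\<lambda>i. Jh i (w t)) (\<lambda>i. \<alpha>i i t) (\<lambda>i. g\<phi> i (h i (w t))) u"
    and alg: "\<And>t. t < T \<Longrightarrow> w (Suc t) = w t - \<eta> t *\<^sub>R vreg t"
    \<comment> \<open>Assumption C\<close>
    and V_pos: "V > 0"
    and C: "\<And>t. t < T \<Longrightarrow> \<exists>vh. (norm vh)\<^sup>2 \<le> V \<and>
        Phi_obj n (\<eta> t) (\<lambda>i. Jh i (w t)) (\<lambda>i. \<alpha>i i t) (\<lambda>i. g\<phi> i (h i (w t))) vh \<le> \<epsilon>\<^sup>2"
  shows "\<forall>i\<in>{1..n}. \<forall>t<T.
     (norm (h i (w (Suc t)) - hs i))\<^sup>2
       \<le> (1 + \<epsilon>) * (norm (h i (w t) - hs i))\<^sup>2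
         - 2 * (1 - 3 * \<alpha>) * \<alpha>i i t * (\<phi> i (h i (w t)) - \<phi> i (hs i))
         + (3 * \<epsilon> + 2) / 4 * real CARD('c) * (4 + (V + 2) * G * D\<^sup>2)\<^sup>2 * \<epsilon>
         + (3 * \<epsilon> + 2) / \<epsilon> *
             (norm (\<eta> t *\<^sub>R (Jh i (w t) *v vreg t) - \<alpha>i i t *\<^sub>R g\<phi> i (h i (w t))))\<^sup>2"
  proof (intro ballI allI impI)
  fix i t assume i: "i \<in> {1..n}" and tT: "t < T"
  define x where "x = h i (w t)"
  define u where "u = x - hs i"
  define a where "a = \<alpha>i i t"
  define g where "g = g\<phi> i x"
  define v where "v = vreg t"
  define e where "e = \<eta> t"
  define J where "J = Jh i (w t)"
  define d where "d = e *\<^sub>R v"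
  define \<delta> where "\<delta> = e *\<^sub>R (J *v v) - a *\<^sub>R g"
  define r where "r = h i (w (Suc t)) - x + J *v d"
  define \<Delta> where "\<Delta> = \<phi> i x - \<phi> i (hs i)"
  define c where "c = real CARD('c)"
  define X where "X = (V + 2) * G * D\<^sup>2"
  have a_pos: "a > 0" using alpha_pos[OF i] by (simp add: a_def)
  have a_le: "a \<le> \<alpha> / L" using alpha_le[OF i tT] by (simp add: a_def)
  have L_pos: "L > 0"
  proof -
    have "0 < \<alpha> / L" using a_pos a_le by linarith
    then show ?thesis using alpha_range by (simp add: zero_less_divide_iff)
  qed
  have \<Delta>_nn: "\<Delta> \<ge> 0" using hs_min[OF i] by (simp add: \<Delta>_def)
  have e_sq: "e\<^sup>2 = D\<^sup>2 * \<epsilon>" using eta_def eps_pos by (simp add: e_def power_mult_distrib)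
  have v_bd: "(norm v)\<^sup>2 \<le> V + 2"
  proof -
    obtain vh where vh1: "(norm vh)\<^sup>2 \<le> V"
      and vh2: "Phi_obj n (\<eta> t) (\<lambda>i. Jh i (w t)) (\<lambda>i. \<alpha>i i t) (\<lambda>i. g\<phi> i (h i (w t))) vh \<le> \<epsilon>\<^sup>2"
      using C[OF tT] by blast
    have m: "Psi_obj \<epsilon> n (\<eta> t) (\<lambda>i. Jh i (w t)) (\<lambda>i. \<alpha>i i t) (\<lambda>i. g\<phi> i (h i (w t))) (vreg t)
        \<le> Psi_obj \<epsilon> n (\<eta> t) (\<lambda>i. Jh i (w t)) (\<lambda>i. \<alpha>i i t) (\<lambda>i. g\<phi> i (h i (w t))) vh"
      by (rule vreg_min[OF tT])
    have nn: "Phi_obj n (\<eta> t) (\<lambda>i. Jh i (w t)) (\<lambda>i. \<alpha>i i t) (\<lambda>i. g\<phi> i (h i (w t))) (vreg t) \<ge> 0"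
      unfolding Phi_obj_def by (intro mult_nonneg_nonneg sum_nonneg) auto
    have "\<epsilon>\<^sup>2 / 2 * (norm v)\<^sup>2 \<le> \<epsilon>\<^sup>2 + \<epsilon>\<^sup>2 / 2 * (norm vh)\<^sup>2"
      using m nn vh2 unfolding Psi_obj_def v_def by linarith
    also have "\<dots> \<le> \<epsilon>\<^sup>2 + \<epsilon>\<^sup>2 / 2 * V"
      using vh1 by (intro add_left_mono mult_left_mono) auto
    finally have "\<epsilon>\<^sup>2 / 2 * (norm v)\<^sup>2 \<le> \<epsilon>\<^sup>2 / 2 * (V + 2)" by (simp add: algebra_simps)
    then show ?thesis using eps_pos by (simp add: mult_le_cancel_left_pos)
  qed
  have r_comp: "\<bar>r $ j\<bar> \<le> G / 2 * (norm d)\<^sup>2" for j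
  proof -
    have "h i (w (Suc t)) = h i (w t - d)" using alg[OF tT] by (simp add: d_def v_def e_def)
    then have "r = h i (w t - d) - h i (w t) + Jh i (w t) *v d" by (simp add: r_def x_def J_def)
    then show ?thesis
      using taylor_rem[of "h i" "Jh i" "Hh i" G "w t" d j] B_jac[OF i] B_hess[OF i] B_bound[OF i]
      by simp
  qed
  have nd: "(norm d)\<^sup>2 = D\<^sup>2 * \<epsilon> * (norm v)\<^sup>2" using e_sq by (simp add: d_def power_mult_distrib)
  have nd_bd: "(norm d)\<^sup>2 \<le> D\<^sup>2 * \<epsilon> * (V + 2)"
    unfolding nd using v_bd eps_pos by (intro mult_left_mono) auto
  have r_bd: "(norm r)\<^sup>2 \<le> c * (G / 2 * (norm d)\<^sup>2)\<^sup>2"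
  proof -
    have "(norm r)\<^sup>2 = (\<Sum>j\<in>UNIV. (r $ j)\<^sup>2)"
      unfolding power2_norm_eq_inner inner_vec_def by (simp add: power2_eq_square)
    also have "\<dots> \<le> (\<Sum>j\<in>(UNIV::'c set). (G / 2 * (norm d)\<^sup>2)\<^sup>2)"
      by (intro sum_mono) (metis abs_le_square_iff abs_of_nonneg r_comp order_trans abs_ge_zero)
    finally show ?thesis by (simp add: c_def)
  qed
  have r_bd2: "(norm r)\<^sup>2 \<le> c * X\<^sup>2 * \<epsilon>\<^sup>2 / 4"
  proof -
    have "G / 2 * (norm d)\<^sup>2 \<le> G / 2 * (D\<^sup>2 * \<epsilon> * (V + 2))"
      using nd_bd G_pos by (intro mult_left_mono) auto
    moreover have "0 \<le> G / 2 * (norm d)\<^sup>2" using G_pos by simp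
    ultimately have "(G / 2 * (norm d)\<^sup>2)\<^sup>2 \<le> (G / 2 * (D\<^sup>2 * \<epsilon> * (V + 2)))\<^sup>2"
      by (rule power_mono)
    also have "\<dots> = X\<^sup>2 * \<epsilon>\<^sup>2 / 4" by (simp add: X_def power2_eq_square)
    finally have k: "(G / 2 * (norm d)\<^sup>2)\<^sup>2 \<le> X\<^sup>2 * \<epsilon>\<^sup>2 / 4" .
    have "c * (G / 2 * (norm d)\<^sup>2)\<^sup>2 \<le> c * (X\<^sup>2 * \<epsilon>\<^sup>2 / 4)"
      using k by (intro mult_left_mono) (auto simp: c_def)
    then show ?thesis using r_bd by simp
  qed
  have gu: "g \<bullet> u \<ge> \<Delta>"
    using grad_ineq[OF A_convex[OF i] A_grad[OF i], of x "hs i"]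
    by (simp add: g_def u_def \<Delta>_def inner_diff_right)
  have gn: "(norm g)\<^sup>2 \<le> 4 * L * \<Delta>"
    unfolding g_def \<Delta>_def
    by (rule grad_bound[OF A_grad[OF i] A_smooth[OF i] L_pos hs_min[OF i]])
  have a2g: "a\<^sup>2 * (norm g)\<^sup>2 \<le> 4 * \<alpha> * a * \<Delta>"
  proof -
    have "a\<^sup>2 * (norm g)\<^sup>2 \<le> a\<^sup>2 * (4 * L * \<Delta>)" using gn by (intro mult_left_mono) auto
    also have "\<dots> = a * (a * L) * 4 * \<Delta>" by (simp add: power2_eq_square)
    also have "a * L \<le> \<alpha>" using a_le L_pos by (simp add: field_simps)
    then have "a * (a * L) * 4 * \<Delta> \<le> a * \<alpha> * 4 * \<Delta>"
      using a_pos \<Delta>_nn by (intro mult_right_mono mult_left_mono) auto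
    finally show ?thesis by (simp add: algebra_simps)
  qed
  have uag: "(norm (u - a *\<^sub>R g))\<^sup>2 \<le> (norm u)\<^sup>2 - 2 * (1 - 2 * \<alpha>) * a * \<Delta>"
  proof -
    have "(norm (u - a *\<^sub>R g))\<^sup>2 = (norm u)\<^sup>2 - 2 * a * (g \<bullet> u) + a\<^sup>2 * (norm g)\<^sup>2"
      unfolding power2_norm_eq_inner by (simp add: inner_diff_left inner_diff_right inner_commute power2_eq_square algebra_simps)
    moreover have "2 * a * \<Delta> \<le> 2 * a * (g \<bullet> u)" using gu a_pos by simp
    ultimately show ?thesis using a2g by (simp add: algebra_simps)
  qed
  have dec: "h i (w (Suc t)) - hs i = (u - a *\<^sub>R g) + (r - \<delta>)"
    by (simp add: r_def \<delta>_def u_def d_def matrix_vector_mult_scaleR algebra_simps)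
  have young: "(norm (p + q))\<^sup>2 \<le> (1 + \<epsilon>) * (norm p)\<^sup>2 + (1 + 1 / \<epsilon>) * (norm q)\<^sup>2" for p q :: "real^'c"
  proof -
    have "2 * (p \<bullet> q) \<le> \<epsilon> * (norm p)\<^sup>2 + (norm q)\<^sup>2 / \<epsilon>"
    proof -
      have "0 \<le> (norm (sqrt \<epsilon> *\<^sub>R p - (1 / sqrt \<epsilon>) *\<^sub>R q))\<^sup>2" by simp
      also have "\<dots> = \<epsilon> * (norm p)\<^sup>2 + (norm q)\<^sup>2 / \<epsilon> - 2 * (p \<bullet> q)"
        using eps_pos unfolding power2_norm_eq_inner by (simp add: inner_diff_left inner_diff_right inner_commute
            power2_eq_square field_simps)
      finally show ?thesis by simp
    qed
    moreover have "(norm (p + q))\<^sup>2 = (norm p)\<^sup>2 + 2 * (p \<bullet> q) + (norm q)\<^sup>2"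
      unfolding power2_norm_eq_inner by (simp add: inner_add_left inner_add_right inner_commute power2_eq_square)
    ultimately show ?thesis by (simp add: algebra_simps add_divide_distrib)
  qed
  have rd: "(norm (r - \<delta>))\<^sup>2 \<le> 2 * (norm r)\<^sup>2 + 2 * (norm \<delta>)\<^sup>2"
  proof -
    have "(norm (r - \<delta>))\<^sup>2 = (norm r)\<^sup>2 - 2 * (r \<bullet> \<delta>) + (norm \<delta>)\<^sup>2"
      unfolding power2_norm_eq_inner by (simp add: inner_diff_left inner_diff_right inner_commute power2_eq_square)
    moreover have "0 \<le> (norm (r + \<delta>))\<^sup>2" by simp
    moreover have "(norm (r + \<delta>))\<^sup>2 = (norm r)\<^sup>2 + 2 * (r \<bullet> \<delta>) + (norm \<delta>)\<^sup>2"
      unfolding power2_norm_eq_inner by (simp add: inner_add_left inner_add_right inner_commute power2_eq_square)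
    ultimately show ?thesis by linarith
  qed
  have main: "(norm (h i (w (Suc t)) - hs i))\<^sup>2
      \<le> (1 + \<epsilon>) * (norm (u - a *\<^sub>R g))\<^sup>2 + (1 + 1 / \<epsilon>) * (2 * (norm r)\<^sup>2 + 2 * (norm \<delta>)\<^sup>2)"
    unfolding dec using young[of "u - a *\<^sub>R g" "r - \<delta>"] rd eps_pos
    by (smt (verit) mult_left_mono divide_pos_pos)
  have t1: "(1 + \<epsilon>) * (norm (u - a *\<^sub>R g))\<^sup>2 \<le> (1 + \<epsilon>) * (norm u)\<^sup>2 - 2 * (1 - 3 * \<alpha>) * a * \<Delta>"
  proof -
    have "(1 + \<epsilon>) * (norm (u - a *\<^sub>R g))\<^sup>2 \<le> (1 + \<epsilon>) * ((norm u)\<^sup>2 - 2 * (1 - 2 * \<alpha>) * a * \<Delta>)"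
      using uag eps_pos by (intro mult_left_mono) auto
    moreover have "0 \<le> \<epsilon> * (2 * (1 - 2 * \<alpha>) * a * \<Delta>)"
      using eps_pos alpha_range a_pos \<Delta>_nn by (intro mult_nonneg_nonneg) auto
    moreover have "0 \<le> \<alpha> * a * \<Delta>" using alpha_range a_pos \<Delta>_nn by simp
    ultimately show ?thesis by (simp add: algebra_simps)
  qed
  have t2: "(1 + 1 / \<epsilon>) * (2 * (norm \<delta>)\<^sup>2) \<le> (3 * \<epsilon> + 2) / \<epsilon> * (norm \<delta>)\<^sup>2"
  proof -
    have "(1 + 1 / \<epsilon>) * 2 \<le> (3 * \<epsilon> + 2) / \<epsilon>" using eps_pos by (simp add: field_simps)
    then show ?thesis by (metis mult.assoc mult_right_mono zero_le_power2)
  qed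
  have t3: "(1 + 1 / \<epsilon>) * (2 * (norm r)\<^sup>2) \<le> (3 * \<epsilon> + 2) / 4 * c * (4 + X)\<^sup>2 * \<epsilon>"
  proof -
    have "(1 + 1 / \<epsilon>) * (2 * (norm r)\<^sup>2) \<le> (1 + 1 / \<epsilon>) * (2 * (c * X\<^sup>2 * \<epsilon>\<^sup>2 / 4))"
      using r_bd2 eps_pos by (intro mult_left_mono) auto
    also have "\<dots> = (2 * \<epsilon> + 2) / 4 * c * X\<^sup>2 * \<epsilon>"
      using eps_pos by (simp add: field_simps power2_eq_square)
    also have "\<dots> \<le> (3 * \<epsilon> + 2) / 4 * c * (4 + X)\<^sup>2 * \<epsilon>"
    proof -
      have X0: "X \<ge> 0" using V_pos G_pos by (simp add: X_def)
      have "X\<^sup>2 \<le> (4 + X)\<^sup>2" using X0 by (intro power_mono) auto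
      moreover have "(2 * \<epsilon> + 2) / 4 \<le> (3 * \<epsilon> + 2) / 4" using eps_pos by simp
      moreover have "c \<ge> 0" by (simp add: c_def)
      ultimately show ?thesis using eps_pos
        by (intro mult_right_mono mult_mono) auto
    qed
    finally show ?thesis .
  qed
  have e1: "\<eta> t *\<^sub>R (Jh i (w t) *v vreg t) - \<alpha>i i t *\<^sub>R g\<phi> i (h i (w t)) = \<delta>"
    by (simp add: \<delta>_def e_def J_def v_def a_def g_def x_def)
  have e2: "\<phi> i (h i (w t)) - \<phi> i (hs i) = \<Delta>" by (simp add: \<Delta>_def x_def)
  have e3: "h i (w t) - hs i = u" by (simp add: u_def x_def)
  have e4: "\<alpha>i i t = a" by (simp add: a_def)
  have e5: "(3 * \<epsilon> + 2) / 4 * real CARD('c) * (4 + (V + 2) * G * D\<^sup>2)\<^sup>2 * \<epsilon>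
      = (3 * \<epsilon> + 2) / 4 * c * (4 + X)\<^sup>2 * \<epsilon>" by (simp add: c_def X_def)
  have dist: "(1 + 1 / \<epsilon>) * (2 * (norm r)\<^sup>2 + 2 * (norm \<delta>)\<^sup>2)
      = (1 + 1 / \<epsilon>) * (2 * (norm r)\<^sup>2) + (1 + 1 / \<epsilon>) * (2 * (norm \<delta>)\<^sup>2)"
    by (simp add: distrib_left)
  show "(norm (h i (w (Suc t)) - hs i))\<^sup>2
       \<le> (1 + \<epsilon>) * (norm (h i (w t) - hs i))\<^sup>2
         - 2 * (1 - 3 * \<alpha>) * \<alpha>i i t * (\<phi> i (h i (w t)) - \<phi> i (hs i))
         + (3 * \<epsilon> + 2) / 4 * real CARD('c) * (4 + (V + 2) * G * D\<^sup>2)\<^sup>2 * \<epsilon>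
         + (3 * \<epsilon> + 2) / \<epsilon> *
             (norm (\<eta> t *\<^sub>R (Jh i (w t) *v vreg t) - \<alpha>i i t *\<^sub>R g\<phi> i (h i (w t))))\<^sup>2"
    unfolding e1 unfolding e2 e3 e4 e5 using main t1 t2 t3 dist by linarith
qed

end
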